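(* For any $\lambda\in[0,1]$, $\alpha>0$, $\beta\ge0$, one has $\tau_1>\tau_2>\tau_3>0$ and $\tau_3\le\boldsymbol{T}_*$, where $\boldsymbol{T}_*=\inf\{T^\lambda(z):z\notin\operatorname{argmin}\phi\}$.
   Context: Let $\phi:\mathbb{R}^n\to\mathbb{R}$ be twice continuously differentiable and convex with $L$-Lipschitz gradient, attaining its minimum. For $z\in\mathbb{R}^n$, $x_z$ is the unique $C^1([0,\infty))\cap C^2((0,\infty))$ solution of $\ddot x(t)+\frac{\alpha}{t}\dot x(t)+\beta\nabla^2\phi(x(t))\dot x(t)+\nabla\phi(x(t))=0$ ($t>0$), $x(0)=z$, $\dot x(0)=0$. For $\lambda\in[0,1]$: $\varphi_{z,\lambda}(t)=\frac12\frac{d}{dt}\|\dot x_z(t)\|^2+\lambda\frac{\alpha}{t}\|\dot x_z(t)\|^2$ and $T^\lambda(z)=\inf\{t>0:\varphi_{z,\lambda}(t)\le0\}$. Let $H(t)=1-\frac{\beta Lt}{\alpha+2}-\frac{Lt^2}{2(\alpha+3)}$; $\tau_1=-\frac{\alpha+3}{\alpha+2}\beta+\sqrt{\left(\frac{\alpha+3}{\alpha+2}\right)^2\beta^2+\frac{2(\alpha+3)}{L}}$ (positive zero of $H$); $\tau_2=-\frac{\alpha+3}{\alpha+2}\beta+\sqrt{\left(\frac{\alpha+3}{\alpha+2}\right)^2\beta^2+\frac{\alpha+3}{L}}$ (where $H=\frac12$); $G(t)=(1+\alpha\lambda)H(t)^2-\alpha(1-\lambda)(1-H(t))^2-\beta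 Lt-\frac{Lt^2}{2}-|1+\alpha(2\lambda-1)|\,H(t)(1-H(t))$; and $\tau_3$ is the unique zero of $G$ in $(0,\tau_2)$. *)

theory Defs
  imports "HOL-Analysis.Analysis"
begin

definition Hfun :: "real \<Rightarrow> real \<Rightarrow> real \<Rightarrow> real \<Rightarrow> real" where
  "Hfun \<alpha> \<beta> L t = 1 - \<beta> * L * t / (\<alpha> + 2) - L * t\<^sup>2 / (2 * (\<alpha> + 3))"

definition tau1 :: "real \<Rightarrow> real \<Rightarrow> real \<Rightarrow> real" where
  "tau1 \<alpha> \<beta> L = - ((\<alpha> + 3) / (\<alpha> + 2)) * \<beta>
     + sqrt (((\<alpha> + 3) / (\<alpha> + 2))\<^sup>2 * \<beta>\<^sup>2 + 2 * (\<alpha> + 3) / L)"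

definition tau2 :: "real \<Rightarrow> real \<Rightarrow> real \<Rightarrow> real" where
  "tau2 \<alpha> \<beta> L = - ((\<alpha> + 3) / (\<alpha> + 2)) * \<beta>
     + sqrt (((\<alpha> + 3) / (\<alpha> + 2))\<^sup>2 * \<beta>\<^sup>2 + (\<alpha> + 3) / L)"

definition Gfun :: "real \<Rightarrow> real \<Rightarrow> real \<Rightarrow> real \<Rightarrow> real \<Rightarrow> real" where
  "Gfun \<alpha> \<beta> L lam t =
     (1 + \<alpha> * lam) * (Hfun \<alpha> \<beta> L t)\<^sup>2
     - \<alpha> * (1 - lam) * (1 - Hfun \<alpha> \<beta> L t)\<^sup>2
     - \<beta> * L * t - L * t\<^sup>2 / 2
     - \<bar>1 + \<alpha> * (2 * lam - 1)\<bar> * Hfun \<alpha> \<beta> L t * (1 - Hfun \<alpha> \<beta> L t)"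

definition tau3 :: "real \<Rightarrow> real \<Rightarrow> real \<Rightarrow> real \<Rightarrow> real" where
  "tau3 \<alpha> \<beta> L lam = (THE t. 0 < t \<and> t < tau2 \<alpha> \<beta> L \<and> Gfun \<alpha> \<beta> L lam t = 0)"

definition argmin_set :: "('a \<Rightarrow> real) \<Rightarrow> 'a set" where
  "argmin_set \<phi> = {x. \<forall>y. \<phi> x \<le> \<phi> y}"

text \<open>varphi_{z,lam}(t) = 1/2 d/dt |xdot_z(t)|^2 + lam * alpha / t * |xdot_z(t)|^2,
  where xd z is the velocity of the trajectory x_z.\<close>
definition varphi :: "('z \<Rightarrow> real \<Rightarrow> 'a::real_normed_vector) \<Rightarrow> real \<Rightarrow> real \<Rightarrow> 'z \<Rightarrow> real \<Rightarrow> real" where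
  "varphi xd \<alpha> lam z t =
     (1/2) * deriv (\<lambda>s. (norm (xd z s))\<^sup>2) t + lam * \<alpha> / t * (norm (xd z t))\<^sup>2"

text \<open>T^lam(z) = inf {t > 0. varphi_{z,lam}(t) \<le> 0}, in the extended reals
  (infimum of the empty set is +infinity).\<close>
definition Tlam :: "('z \<Rightarrow> real \<Rightarrow> 'a::real_normed_vector) \<Rightarrow> real \<Rightarrow> real \<Rightarrow> 'z \<Rightarrow> ereal" where
  "Tlam xd \<alpha> lam z = Inf (ereal ` {t. 0 < t \<and> varphi xd \<alpha> lam z t \<le> 0})"

end

theory Submission
  imports Defs
begin

lemma gen_mvt:
  fixes f :: "real \<Rightarrow> 'a::real_inner"
  assumes ab: "a \<le> b" and cf: "continuous_on {a..b} f" and cp: "continuous_on {a..b} p"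
    and df: "\<And>s. a < s \<Longrightarrow> s < b \<Longrightarrow> (f has_vector_derivative f' s) (at s)"
    and dp: "\<And>s. a < s \<Longrightarrow> s < b \<Longrightarrow> (p has_real_derivative p' s) (at s)"
    and bd: "\<And>s. a < s \<Longrightarrow> s < b \<Longrightarrow> norm (f' s) \<le> p' s"
  shows "norm (f b - f a) \<le> p b - p a"
proof (cases "a = b")
  case True then show ?thesis by simp
next
  case False
  with ab have lt: "a < b" by simp
  define v where "v = f b - f a"
  define h where "h s = inner (f s) v - norm v * p s" for s
  have dh: "(h has_real_derivative (inner (f' s) v - norm v * p' s)) (at s)" if "a < s" "s < b" for s
    unfolding h_def
    using df[OF that] dp[OF that]
    by (auto intro!: derivative_eq_intros simp: has_vector_derivative_def has_field_derivative_def
        inner_commute fun_eq_iff algebra_simps)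
  have ch: "continuous_on {a..b} h" unfolding h_def
    by (intro continuous_intros cf cp)
  obtain l c where c: "a < c" "c < b" and dc: "DERIV h c :> l" and eq: "h b - h a = (b - a) * l"
    using MVT[OF lt ch] dh real_differentiable_def by blast
  have "l = inner (f' c) v - norm v * p' c" using DERIV_unique[OF dc dh[OF c]] .
  also have "\<dots> \<le> norm (f' c) * norm v - norm v * p' c"
    using norm_cauchy_schwarz[of "f' c" v] by simp
  also have "\<dots> \<le> 0" using bd[OF c] by (simp add: mult.commute mult_left_mono)
  finally have "l \<le> 0" .
  then have "(b - a) * l \<le> 0" using lt by (simp add: mult_nonneg_nonpos)
  then have "h b \<le> h a" using eq by simp
  then have "inner v v \<le> norm v * (p b - p a)"
    unfolding h_def v_def by (simp add: inner_diff_left algebra_simps)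
  then have "norm v * norm v \<le> norm v * (p b - p a)"
    by (simp add: power2_norm_eq_inner[symmetric] power2_eq_square)
  moreover have "p a \<le> p b"
  proof -
    obtain l2 c2 where c2: "a < c2" "c2 < b" and dc2: "DERIV p c2 :> l2" and eq2: "p b - p a = (b - a) * l2"
      using MVT[OF lt cp] dp real_differentiable_def by blast
    have "l2 = p' c2" using DERIV_unique[OF dc2 dp[OF c2]] .
    then have "l2 \<ge> 0" using bd[OF c2] norm_ge_zero order_trans by metis
    then have "(b - a) * l2 \<ge> 0" using lt by simp
    then show ?thesis using eq2 by simp
  qed
  ultimately show ?thesis unfolding v_def
    by (cases "norm (f b - f a) = 0") (auto simp: mult_le_cancel_left)
qed

locale params =
  fixes \<alpha> \<beta> L lam :: real
  assumes alpha: "\<alpha> > 0" and beta: "\<beta> \<ge> 0" and Lpos: "L > 0" and lam0: "0 \<le> lam" and lam1: "lam \<le> 1"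
begin

abbreviation "H \<equiv> Hfun \<alpha> \<beta> L"
abbreviation "G \<equiv> Gfun \<alpha> \<beta> L lam"

lemma H0: "H 0 = 1" by (simp add: Hfun_def)

lemma H_strict: assumes "0 \<le> s" "s < t" shows "H t < H s"
proof -
  have a: "\<beta> * L * s / (\<alpha> + 2) \<le> \<beta> * L * t / (\<alpha> + 2)"
    using assms alpha beta Lpos by (intro divide_right_mono mult_left_mono) auto
  have "s\<^sup>2 < t\<^sup>2" using assms by (simp add: power_strict_mono)
  then have b: "L * s\<^sup>2 / (2 * (\<alpha> + 3)) < L * t\<^sup>2 / (2 * (\<alpha> + 3))"
    using alpha Lpos by (intro divide_strict_right_mono mult_strict_left_mono) auto
  show ?thesis using a b by (simp add: Hfun_def)
qed

lemma H_mono: assumes "0 \<le> s" "s \<le> t" shows "H t \<le> H s"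
  using H_strict[of s t] assms by (cases "s = t") auto

lemma H_le1: "0 \<le> t \<Longrightarrow> H t \<le> 1" using H_mono[of 0 t] H0 by simp

definition "A = (\<alpha> + 3) / (\<alpha> + 2) * \<beta>"

lemma A_nonneg: "A \<ge> 0" using alpha beta by (simp add: A_def)

lemma tau2_eq: "tau2 \<alpha> \<beta> L = - A + sqrt (A\<^sup>2 + (\<alpha> + 3) / L)"
  by (simp add: tau2_def A_def power_mult_distrib power_divide)

lemma tau1_eq: "tau1 \<alpha> \<beta> L = - A + sqrt (A\<^sup>2 + 2 * (\<alpha> + 3) / L)"
  by (simp add: tau1_def A_def power_mult_distrib power_divide)

lemma tau2_pos: "tau2 \<alpha> \<beta> L > 0"
proof -
  have "0 < (\<alpha> + 3) / L" using alpha Lpos by simp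
  then have "sqrt (A\<^sup>2) < sqrt (A\<^sup>2 + (\<alpha> + 3) / L)" by (intro real_sqrt_less_mono) simp
  moreover have "sqrt (A\<^sup>2) = A" using A_nonneg by simp
  ultimately have "A < sqrt (A\<^sup>2 + (\<alpha> + 3) / L)" using A_nonneg by simp
  then show ?thesis using A_nonneg by (simp add: tau2_eq)
qed

lemma tau12: "tau1 \<alpha> \<beta> L > tau2 \<alpha> \<beta> L"
proof -
  have "(\<alpha> + 3) / L < 2 * (\<alpha> + 3) / L" using alpha Lpos by (simp add: divide_strict_right_mono)
  then show ?thesis by (simp add: tau2_eq tau1_eq)
qed

lemma H_tau2: "H (tau2 \<alpha> \<beta> L) = 1/2"
proof -
  define t where "t = tau2 \<alpha> \<beta> L"
  have D: "A\<^sup>2 + (\<alpha> + 3) / L \<ge> 0" using alpha Lpos by simp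
  have "t + A = sqrt (A\<^sup>2 + (\<alpha> + 3) / L)" by (simp add: t_def tau2_eq)
  then have "(t + A)\<^sup>2 = A\<^sup>2 + (\<alpha> + 3) / L" using D by simp
  then have e: "t\<^sup>2 + 2 * A * t = (\<alpha> + 3) / L" by (simp add: power2_eq_square algebra_simps)
  have "1 - H t = \<beta> * L * t / (\<alpha> + 2) + L * t\<^sup>2 / (2 * (\<alpha> + 3))"
    by (simp add: Hfun_def)
  also have "\<dots> = L / (2 * (\<alpha> + 3)) * (t\<^sup>2 + 2 * A * t)"
    using alpha Lpos by (simp add: A_def field_simps)
  also have "\<dots> = 1/2" using e alpha Lpos by simp
  finally have "H t = 1/2" by linarith
  then show ?thesis by (simp only: t_def)
qed

lemma H_gt_half: "0 \<le> t \<Longrightarrow> t < tau2 \<alpha> \<beta> L \<Longrightarrow> H t > 1/2"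
  using H_strict[of t "tau2 \<alpha> \<beta> L"] H_tau2 by simp

definition "cc = \<bar>1 + \<alpha> * (2 * lam - 1)\<bar>"

definition "f h = (1 + \<alpha> * lam) * h\<^sup>2 - \<alpha> * (1 - lam) * (1 - h)\<^sup>2 - cc * h * (1 - h)"

lemma G_eq: "G t = f (H t) - \<beta> * L * t - L * t\<^sup>2 / 2"
  by (simp add: Gfun_def f_def cc_def)

lemma f_mono: assumes "1/2 \<le> h1" "h1 \<le> h2" "h2 \<le> 1" shows "f h1 \<le> f h2"
proof -
  have "f h2 - f h1 = (h2 - h1) * ((1 + \<alpha> * lam) * (h1 + h2) + \<alpha> * (1 - lam) * (2 - h1 - h2)
      + cc * (h1 + h2 - 1))"
    by (simp add: f_def power2_eq_square algebra_simps)
  moreover have "(1 + \<alpha> * lam) * (h1 + h2) \<ge> 0" using alpha lam0 assms by simp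
  moreover have "cc * (h1 + h2 - 1) \<ge> 0" using assms by (simp add: cc_def)
  moreover have "\<alpha> * (1 - lam) * (2 - h1 - h2) \<ge> 0" using assms alpha lam1 by simp
  ultimately show ?thesis using assms
    by (smt (verit) mult_nonneg_nonneg)
qed

lemma H_ge_half: "0 \<le> t \<Longrightarrow> t \<le> tau2 \<alpha> \<beta> L \<Longrightarrow> H t \<ge> 1/2"
  using H_mono[of t "tau2 \<alpha> \<beta> L"] H_tau2 by simp

lemma G_strict: assumes "0 \<le> s" "s < t" "t \<le> tau2 \<alpha> \<beta> L" shows "G t < G s"
proof -
  have "f (H t) \<le> f (H s)"
    using assms H_ge_half[of t] H_mono[of s t] H_le1[of s] by (intro f_mono) auto
  moreover have "\<beta> * L * s \<le> \<beta> * L * t" using assms beta Lpos by (intro mult_left_mono) auto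
  moreover have "L * s\<^sup>2 < L * t\<^sup>2" using assms Lpos by (simp add: power_strict_mono)
  ultimately show ?thesis using G_eq[of t] G_eq[of s] by linarith
qed

lemma G0: "G 0 > 0"
proof -
  have "1 + \<alpha> * lam > 0" using alpha lam0 by (simp add: add_pos_nonneg)
  then show ?thesis by (simp add: G_eq H0 f_def)
qed

lemma G_tau2: "G (tau2 \<alpha> \<beta> L) < 0"
proof -
  have "f (1/2) = ((1 + \<alpha> * (2 * lam - 1)) - cc) / 4" by (simp add: f_def power2_eq_square field_simps)
  also have "\<dots> \<le> 0" by (simp add: cc_def)
  finally have "f (1/2) \<le> 0" .
  moreover have "\<beta> * L * tau2 \<alpha> \<beta> L \<ge> 0" using beta Lpos tau2_pos by simp
  moreover have "L * (tau2 \<alpha> \<beta> L)\<^sup>2 > 0" using Lpos tau2_pos by simp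
  moreover have "G (tau2 \<alpha> \<beta> L) = f (1/2) - \<beta> * L * tau2 \<alpha> \<beta> L - L * (tau2 \<alpha> \<beta> L)\<^sup>2 / 2"
    using G_eq[of "tau2 \<alpha> \<beta> L"] H_tau2 by simp
  ultimately show ?thesis by linarith
qed

lemma G_cont: "continuous_on S G"
proof -
  have Heq: "H = (\<lambda>t. 1 - (\<beta> * L / (\<alpha> + 2)) * t - (L / (2 * (\<alpha> + 3))) * t\<^sup>2)"
    by (auto simp: Hfun_def fun_eq_iff)
  have cH: "continuous_on S H" unfolding Heq by (intro continuous_intros)
  have Geq: "G = (\<lambda>t. f (H t) - \<beta> * L * t - L * t\<^sup>2 / 2)" using G_eq by (simp add: fun_eq_iff)
  show ?thesis unfolding Geq f_def by (intro continuous_intros cH) auto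
qed

lemma tau3_props: "0 < tau3 \<alpha> \<beta> L lam \<and> tau3 \<alpha> \<beta> L lam < tau2 \<alpha> \<beta> L \<and> G (tau3 \<alpha> \<beta> L lam) = 0"
proof -
  obtain t where t: "0 \<le> t" "t \<le> tau2 \<alpha> \<beta> L" "G t = 0"
  proof -
    have "\<exists>x\<ge>0. x \<le> tau2 \<alpha> \<beta> L \<and> G x = 0"
      by (rule IVT2') (use G0 G_tau2 tau2_pos G_cont in auto)
    then show ?thesis using that by blast
  qed
  have t1: "0 < t" using t G0 by (cases "t = 0") auto
  have t2: "t < tau2 \<alpha> \<beta> L" using t G_tau2 by (cases "t = tau2 \<alpha> \<beta> L") auto
  have uniq: "s = t" if "0 < s" "s < tau2 \<alpha> \<beta> L" "G s = 0" for s
  proof (rule ccontr)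
    assume "s \<noteq> t"
    then consider "s < t" | "t < s" by linarith
    then show False
    proof cases
      case 1
      then have "G t < G s" using that t2 by (intro G_strict) auto
      then show False using that t by simp
    next
      case 2
      then have "G s < G t" using that t1 by (intro G_strict) auto
      then show False using that t by simp
    qed
  qed
  have "tau3 \<alpha> \<beta> L lam = t" unfolding tau3_def
  proof (rule the_equality)
    show "0 < t \<and> t < tau2 \<alpha> \<beta> L \<and> G t = 0" using t t1 t2 by blast
    show "\<And>s. 0 < s \<and> s < tau2 \<alpha> \<beta> L \<and> G s = 0 \<Longrightarrow> s = t" using uniq by blast
  qed
  then show ?thesis using t t1 t2 by simp
qed

lemma G_pos_before: assumes "0 \<le> t" "t < tau3 \<alpha> \<beta> L lam" shows "G t > 0"
proof -
  have "G (tau3 \<alpha> \<beta> L lam) < G t" using tau3_props assms by (intro G_strict) auto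
  then show ?thesis using tau3_props by simp
qed

end

locale sys = params \<alpha> \<beta> L lam
  for \<alpha> \<beta> L lam :: real +
  fixes \<phi> :: "real^'n \<Rightarrow> real"
    and grad :: "real^'n \<Rightarrow> real^'n"
    and hess :: "real^'n \<Rightarrow> ((real^'n) \<Rightarrow>\<^sub>L (real^'n))"
    and x xd xdd :: "real^'n \<Rightarrow> real \<Rightarrow> real^'n"
  assumes grad: "\<And>y. (\<phi> has_derivative (\<lambda>h. grad y \<bullet> h)) (at y)"
    and hess: "\<And>y. (grad has_derivative blinfun_apply (hess y)) (at y)"
    and convex: "convex_on UNIV \<phi>"
    and lipschitz: "\<And>y w. norm (grad y - grad w) \<le> L * norm (y - w)"
    and x_C1: "\<And>z t. t \<ge> 0 \<Longrightarrow> (x z has_vector_derivative xd z t) (at t within {0..})"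
    and xd_cont: "\<And>z. continuous_on {0..} (xd z)"
    and xd_C1: "\<And>z t. t > 0 \<Longrightarrow> (xd z has_vector_derivative xdd z t) (at t)"
    and ode: "\<And>z t. t > 0 \<Longrightarrow>
       xdd z t + (\<alpha> / t) *\<^sub>R xd z t + \<beta> *\<^sub>R (hess (x z t) (xd z t)) + grad (x z t) = 0"
    and init_pos: "\<And>z. x z 0 = z"
    and init_vel: "\<And>z. xd z 0 = 0"
begin

lemma hess_bound: "norm (hess y h) \<le> L * norm h"
proof -
  define w where "w = hess y h"
  define F where "F e = w \<bullet> grad (y + e *\<^sub>R h)" for e
  have "((\<lambda>e. y + e *\<^sub>R h) has_derivative (\<lambda>e. e *\<^sub>R h)) (at 0)"
    by (auto intro!: derivative_eq_intros)
  then have "((\<lambda>e. grad (y + e *\<^sub>R h)) has_derivative (\<lambda>e. hess y (e *\<^sub>R h))) (at 0)"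
    using has_derivative_compose[of "\<lambda>e. y + e *\<^sub>R h" _ 0 UNIV grad "hess y"] hess[of y]
    by simp
  then have "(F has_derivative (\<lambda>e. w \<bullet> hess y (e *\<^sub>R h))) (at 0)"
    unfolding F_def by (auto intro!: derivative_eq_intros)
  then have "(F has_real_derivative (w \<bullet> w)) (at 0)"
    unfolding has_field_derivative_def
    by (rule has_derivative_eq_rhs) (simp add: fun_eq_iff w_def blinfun.scaleR_right mult.commute)
  then have lim: "((\<lambda>d. (F (0 + d) - F 0) / d) \<longlongrightarrow> w \<bullet> w) (at 0)"
    using DERIV_def by blast
  have "eventually (\<lambda>d. norm w * (L * norm h) \<ge> (F (0 + d) - F 0) / d) (at 0)"
  proof (rule always_eventually, rule allI)
    fix d :: real
    show "norm w * (L * norm h) \<ge> (F (0 + d) - F 0) / d"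
    proof (cases "d = 0")
      case True then show ?thesis using Lpos by simp
    next
      case False
      have "\<bar>F d - F 0\<bar> = \<bar>w \<bullet> (grad (y + d *\<^sub>R h) - grad y)\<bar>"
        by (simp add: F_def inner_diff_right)
      also have "\<dots> \<le> norm w * norm (grad (y + d *\<^sub>R h) - grad y)"
        by (rule Cauchy_Schwarz_ineq2)
      also have "\<dots> \<le> norm w * (L * (\<bar>d\<bar> * norm h))"
        using lipschitz[of "y + d *\<^sub>R h" y] by (intro mult_left_mono) auto
      finally have "\<bar>F d - F 0\<bar> \<le> \<bar>d\<bar> * (norm w * (L * norm h))" by (simp add: algebra_simps)
      then have "\<bar>(F d - F 0) / d\<bar> \<le> norm w * (L * norm h)"
        using False by (simp add: abs_divide divide_le_eq mult.commute)
      then show ?thesis by (smt (verit))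
    qed
  qed
  then have "w \<bullet> w \<le> norm w * (L * norm h)"
    using tendsto_upperbound[OF lim] by simp
  then have "norm w * norm w \<le> norm w * (L * norm h)"
    by (simp add: power2_norm_eq_inner[symmetric] power2_eq_square)
  then show ?thesis unfolding w_def
    by (cases "norm (hess y h) = 0") (use Lpos in \<open>auto simp: mult_le_cancel_left zero_le_mult_iff\<close>)
qed

lemma grad_ne: assumes "z \<notin> argmin_set \<phi>" shows "grad z \<noteq> 0"
proof
  assume g0: "grad z = 0"
  have "\<phi> z \<le> \<phi> y" for y
  proof -
    define F where "F s = \<phi> (z + s *\<^sub>R (y - z))" for s
    have "convex_on UNIV F"
      unfolding convex_on_def F_def
    proof (intro conjI ballI allI impI)
      fix a b u v :: real assume uv: "u \<ge> 0" "v \<ge> 0" "u + v = 1"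
      have "z + (u * a + v * b) *\<^sub>R (y - z) = u *\<^sub>R (z + a *\<^sub>R (y - z)) + v *\<^sub>R (z + b *\<^sub>R (y - z))"
        using uv by (simp add: algebra_simps flip: scaleR_add_left)
      then show "\<phi> (z + (u *\<^sub>R a + v *\<^sub>R b) *\<^sub>R (y - z)) \<le> u * \<phi> (z + a *\<^sub>R (y - z)) + v * \<phi> (z + b *\<^sub>R (y - z))"
        using convex uv unfolding convex_on_def by simp
    qed simp
    moreover have "(F has_real_derivative 0) (at 0)"
    proof -
      have d1: "((\<lambda>s. z + s *\<^sub>R (y - z)) has_derivative (\<lambda>s. s *\<^sub>R (y - z))) (at 0)"
        by (auto intro!: derivative_eq_intros)
      have gz: "(\<phi> has_derivative (\<lambda>h. grad z \<bullet> h)) (at (z + 0 *\<^sub>R (y - z)))"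
        using grad[of z] by simp
      have "(F has_derivative (\<lambda>s. grad z \<bullet> (s *\<^sub>R (y - z)))) (at 0)"
        unfolding F_def using has_derivative_compose[OF d1 gz] by simp
      then show ?thesis using g0 by (simp add: has_field_derivative_def mult_zero_left[abs_def])
    qed
    ultimately have "F 1 - F 0 \<ge> 0 * (1 - 0)"
      by (intro convex_on_imp_above_tangent[where A = UNIV]) auto
    then show ?thesis by (simp add: F_def)
  qed
  then show False using assms by (simp add: argmin_set_def)
qed

end

lemma vec_id:
  fixes u B g g0 :: "'a::real_vector"
  assumes "d = P * c"
  shows "P *\<^sub>R (- c *\<^sub>R u - B - g) + d *\<^sub>R u + P *\<^sub>R g0 = P *\<^sub>R (g0 - B - g)"
  using assms by (simp add: algebra_simps)

context sys begin

lemma x_at: "t > 0 \<Longrightarrow> (x z has_vector_derivative xd z t) (at t)"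
  using x_C1[of t z] at_within_interior[of t "{0..}"] by simp

lemma x_cont: "continuous_on {0..} (x z)"
  unfolding continuous_on_eq_continuous_within
  using x_C1 has_vector_derivative_continuous by blast

lemma wlem:
  assumes s: "s > 0" and cp: "continuous_on {0..s} p" and p0: "p 0 = 0"
    and dp: "\<And>r. 0 < r \<Longrightarrow> r < s \<Longrightarrow> (p has_real_derivative p' r) (at r)"
    and bd: "\<And>r. 0 < r \<Longrightarrow> r < s \<Longrightarrow>
       r powr \<alpha> * norm (\<beta> *\<^sub>R hess (x z r) (xd z r) + grad (x z r) - grad z) \<le> p' r"
  shows "s powr \<alpha> * norm (xd z s + (s / (\<alpha> + 1)) *\<^sub>R grad z) \<le> p s"
proof -
  define W where "W r = r powr \<alpha> *\<^sub>R xd z r + (r powr (\<alpha> + 1) / (\<alpha> + 1)) *\<^sub>R grad z" for r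
  define W' where "W' r = r powr \<alpha> *\<^sub>R (grad z - \<beta> *\<^sub>R hess (x z r) (xd z r) - grad (x z r))" for r
  have dW: "(W has_vector_derivative W' r) (at r)" if r: "0 < r" "r < s" for r
  proof -
    have d1: "((\<lambda>r. r powr \<alpha>) has_real_derivative \<alpha> * r powr (\<alpha> - 1)) (at r)"
      using has_real_derivative_powr r by simp
    have d2: "((\<lambda>r. r powr (\<alpha> + 1) / (\<alpha> + 1)) has_real_derivative r powr \<alpha>) (at r)"
      using has_real_derivative_powr[of r "\<alpha> + 1"] r alpha
      by (auto intro!: derivative_eq_intros)
    have "(W has_vector_derivative
        (r powr \<alpha> *\<^sub>R xdd z r + (\<alpha> * r powr (\<alpha> - 1)) *\<^sub>R xd z r + r powr \<alpha> *\<^sub>R grad z)) (at r)"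
    proof -
      have a: "((\<lambda>r. r powr \<alpha> *\<^sub>R xd z r) has_vector_derivative
          (r powr \<alpha> *\<^sub>R xdd z r + (\<alpha> * r powr (\<alpha> - 1)) *\<^sub>R xd z r)) (at r)"
        by (rule has_vector_derivative_scaleR[OF d1 xd_C1[OF r(1)]])
      have b: "((\<lambda>r. (r powr (\<alpha> + 1) / (\<alpha> + 1)) *\<^sub>R grad z) has_vector_derivative
          (r powr \<alpha>) *\<^sub>R grad z) (at r)"
        using has_vector_derivative_scaleR[OF d2 has_vector_derivative_const[of "grad z"]] by simp
      show ?thesis unfolding W_def using has_vector_derivative_add[OF a b] by simp
    qed
    moreover have "r powr \<alpha> *\<^sub>R xdd z r + (\<alpha> * r powr (\<alpha> - 1)) *\<^sub>R xd z r + r powr \<alpha> *\<^sub>R grad z = W' r"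
    proof -
      have pe: "r powr (\<alpha> - 1) = r powr \<alpha> / r" using r by (simp add: powr_diff)
      have xe: "xdd z r = - (\<alpha> / r) *\<^sub>R xd z r - \<beta> *\<^sub>R (hess (x z r) (xd z r)) - grad (x z r)"
      proof -
        have "xdd z r = (xdd z r + (\<alpha> / r) *\<^sub>R xd z r + \<beta> *\<^sub>R (hess (x z r) (xd z r)) + grad (x z r))
           - (\<alpha> / r) *\<^sub>R xd z r - \<beta> *\<^sub>R (hess (x z r) (xd z r)) - grad (x z r)" by simp
        also have "\<dots> = - (\<alpha> / r) *\<^sub>R xd z r - \<beta> *\<^sub>R (hess (x z r) (xd z r)) - grad (x z r)"
          using ode[of r z] r by simp
        finally show ?thesis .
      qed
      show ?thesis unfolding W'_def xe pe
        by (rule vec_id) simp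
    qed
    ultimately show ?thesis by simp
  qed
  have cW: "continuous_on {0..s} W"
  proof -
    have c1: "continuous_on {0..s} (\<lambda>r. r powr \<alpha>)"
      using alpha by (intro continuous_on_powr') (auto intro: continuous_intros)
    have c2: "continuous_on {0..s} (\<lambda>r. r powr (\<alpha> + 1))"
      using alpha by (intro continuous_on_powr') (auto intro: continuous_intros)
    have c3: "continuous_on {0..s} (xd z)" by (rule continuous_on_subset[OF xd_cont]) auto
    have c4: "continuous_on {0..s} (\<lambda>r. r powr (\<alpha> + 1) / (\<alpha> + 1))"
      using c2 alpha by (intro continuous_on_divide continuous_on_const) auto
    show ?thesis unfolding W_def
      by (intro continuous_on_add continuous_on_scaleR c1 c3 c4 continuous_on_const)
  qed
  have "norm (W s - W 0) \<le> p s - p 0"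
  proof (rule gen_mvt[OF _ cW cp dW dp])
    fix r assume r: "0 < r" "r < s"
    have "norm (W' r) = r powr \<alpha> * norm (grad z - \<beta> *\<^sub>R hess (x z r) (xd z r) - grad (x z r))"
      by (simp add: W'_def)
    also have "\<dots> = r powr \<alpha> * norm (\<beta> *\<^sub>R hess (x z r) (xd z r) + grad (x z r) - grad z)"
      by (simp add: norm_minus_commute algebra_simps)
    also have "\<dots> \<le> p' r" using bd r by simp
    finally show "norm (W' r) \<le> p' r" .
  qed (use s in simp)
  moreover have "W 0 = 0" using alpha by (simp add: W_def init_vel)
  moreover have "W s = s powr \<alpha> *\<^sub>R (xd z s + (s / (\<alpha> + 1)) *\<^sub>R grad z)"
    using s by (simp add: W_def powr_add scaleR_add_right)
  ultimately show ?thesis using p0 s by simp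
qed

end

lemma cont_powr: "c > 0 \<Longrightarrow> continuous_on {0..s} (\<lambda>r::real. r powr c)"
  by (intro continuous_on_powr') (auto intro: continuous_intros)

lemma powr_div_deriv:
  assumes c: "c > 0" and r: "r > 0"
  shows "((\<lambda>r. r powr c / c) has_real_derivative r powr (c - 1)) (at r)"
proof -
  have "((\<lambda>r. r powr c / c) has_real_derivative c * r powr (c - 1) / c) (at r)"
    using has_real_derivative_powr[OF r, of c] by (rule DERIV_cdivide)
  then show ?thesis using c by simp
qed

lemma alg1: fixes L K \<beta> P s a b :: real
  shows "L * K * (\<beta> * (P * s\<^sup>2 / a) + (P * s ^ 3 / b) / 2) = P * (K * s * (\<beta> * L * s / a + L * s\<^sup>2 / (2 * b)))"
  by (simp add: algebra_simps power2_eq_square power3_eq_cube)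

context sys begin

lemma kbound:
  "norm (\<beta> *\<^sub>R hess (x z r) (xd z r) + grad (x z r) - grad z)
     \<le> \<beta> * L * norm (xd z r) + L * norm (x z r - z)"
proof -
  have "norm (\<beta> *\<^sub>R hess (x z r) (xd z r) + grad (x z r) - grad z)
      \<le> norm (\<beta> *\<^sub>R hess (x z r) (xd z r)) + norm (grad (x z r) - grad z)"
    using norm_triangle_ineq[of "\<beta> *\<^sub>R hess (x z r) (xd z r)" "grad (x z r) - grad z"]
    by (simp add: add_diff_eq)
  also have "norm (\<beta> *\<^sub>R hess (x z r) (xd z r)) \<le> \<beta> * (L * norm (xd z r))"
    using hess_bound[of "x z r" "xd z r"] beta by (simp add: mult_left_mono)
  also have "norm (grad (x z r) - grad z) \<le> L * norm (x z r - z)" by (rule lipschitz)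
  finally show ?thesis by (simp add: mult.assoc)
qed

lemma xbound:
  assumes r: "r \<ge> 0" and cq: "continuous_on {0..r} q"
    and dq: "\<And>s. 0 < s \<Longrightarrow> s < r \<Longrightarrow> (q has_real_derivative q' s) (at s)"
    and bd: "\<And>s. 0 < s \<Longrightarrow> s < r \<Longrightarrow> norm (xd z s) \<le> q' s"
  shows "norm (x z r - z) \<le> q r - q 0"
proof -
  have cx: "continuous_on {0..r} (x z)" by (rule continuous_on_subset[OF x_cont]) auto
  have "norm (x z r - x z 0) \<le> q r - q 0"
    by (rule gen_mvt[OF r cx cq x_at dq bd]) auto
  then show ?thesis by (simp add: init_pos)
qed

lemma xbound_lin:
  assumes r: "r \<ge> 0" and bd: "\<And>s. 0 < s \<Longrightarrow> s < r \<Longrightarrow> norm (xd z s) \<le> B"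
  shows "norm (x z r - z) \<le> B * r"
  using xbound[OF r, of "\<lambda>s. B * s" "\<lambda>s. B"] bd
  by (auto intro!: continuous_intros derivative_eq_intros)

lemma xbound_quad:
  assumes r: "r \<ge> 0" and bd: "\<And>s. 0 < s \<Longrightarrow> s < r \<Longrightarrow> norm (xd z s) \<le> K * s"
  shows "norm (x z r - z) \<le> K * r\<^sup>2 / 2"
proof -
  have "norm (x z r - z) \<le> K * r\<^sup>2 / 2 - K * 0\<^sup>2 / 2"
  proof (rule xbound[OF r, of "\<lambda>s. K * s\<^sup>2 / 2" "\<lambda>s. K * s"])
    show "continuous_on {0..r} (\<lambda>s. K * s\<^sup>2 / 2)" by (intro continuous_intros) auto
    show "((\<lambda>s. K * s\<^sup>2 / 2) has_real_derivative K * s) (at s)" for s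
      by (auto intro!: derivative_eq_intros)
  qed (use bd in auto)
  then show ?thesis by simp
qed

lemma crude:
  assumes t: "t > 0"
  shows "\<exists>C. \<forall>s. 0 < s \<longrightarrow> s \<le> t \<longrightarrow> norm (xd z s) \<le> C * s"
proof -
  have "compact (xd z ` {0..t})"
    by (rule compact_continuous_image[OF continuous_on_subset[OF xd_cont]]) auto
  from compact_imp_bounded[OF this] obtain B0 where B0: "\<forall>y\<in>xd z ` {0..t}. norm y \<le> B0"
    unfolding bounded_iff by blast
  then have B0': "\<And>r. 0 \<le> r \<Longrightarrow> r \<le> t \<Longrightarrow> norm (xd z r) \<le> B0" by auto
  have B0pos: "B0 \<ge> 0" using B0'[of 0] t by (simp add: init_vel)
  define D where "D = L * B0 * (\<beta> + t)"
  have D0: "D \<ge> 0" using B0pos Lpos beta t by (simp add: D_def)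
  have main: "norm (xd z s + (s / (\<alpha> + 1)) *\<^sub>R grad z) \<le> D * s / (\<alpha> + 1)"
    if s: "0 < s" "s \<le> t" for s
  proof -
    have "s powr \<alpha> * norm (xd z s + (s / (\<alpha> + 1)) *\<^sub>R grad z) \<le> D * s powr (\<alpha> + 1) / (\<alpha> + 1)"
    proof (rule wlem[OF s(1), of "\<lambda>r. D * r powr (\<alpha> + 1) / (\<alpha> + 1)" "\<lambda>r. D * r powr \<alpha>"])
      have "continuous_on {0..s} (\<lambda>r. r powr (\<alpha> + 1))" using alpha by (intro cont_powr) simp
      then show "continuous_on {0..s} (\<lambda>r. D * r powr (\<alpha> + 1) / (\<alpha> + 1))"
        using alpha by (intro continuous_on_divide continuous_on_mult continuous_on_const) auto
      show "D * 0 powr (\<alpha> + 1) / (\<alpha> + 1) = 0" by simp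
    next
      fix r assume r: "0 < r" "r < s"
      show "((\<lambda>r. D * r powr (\<alpha> + 1) / (\<alpha> + 1)) has_real_derivative D * r powr \<alpha>) (at r)"
        using has_real_derivative_powr[of r "\<alpha> + 1"] alpha r by (auto intro!: derivative_eq_intros)
      have k: "norm (\<beta> *\<^sub>R hess (x z r) (xd z r) + grad (x z r) - grad z)
          \<le> \<beta> * L * norm (xd z r) + L * norm (x z r - z)" by (rule kbound)
      have u: "norm (xd z r) \<le> B0" using B0' r s by simp
      have xx: "norm (x z r - z) \<le> B0 * r" using r s by (intro xbound_lin) (auto intro!: B0')
      have "\<beta> * L * norm (xd z r) \<le> \<beta> * L * B0" using u beta Lpos by (simp add: mult_left_mono)
      moreover have "L * norm (x z r - z) \<le> L * (B0 * t)"
      proof -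
        have "B0 * r \<le> B0 * t" using r s B0pos by (intro mult_left_mono) auto
        then show ?thesis using xx Lpos by (intro mult_left_mono) auto
      qed
      ultimately have kD: "norm (\<beta> *\<^sub>R hess (x z r) (xd z r) + grad (x z r) - grad z) \<le> D"
        using k by (simp add: D_def algebra_simps)
      then show "r powr \<alpha> * norm (\<beta> *\<^sub>R hess (x z r) (xd z r) + grad (x z r) - grad z) \<le> D * r powr \<alpha>"
        using mult_left_mono[OF kD, of "r powr \<alpha>"] by (simp add: mult.commute)
    qed
    also have "\<dots> = s powr \<alpha> * (D * s / (\<alpha> + 1))" using s by (simp add: powr_add)
    finally have "s powr \<alpha> * norm (xd z s + (s / (\<alpha> + 1)) *\<^sub>R grad z) \<le> s powr \<alpha> * (D * s / (\<alpha> + 1))" .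
    moreover have "s powr \<alpha> > 0" using s by simp
    ultimately show ?thesis using mult_le_cancel_left_pos by blast
  qed
  show ?thesis
  proof (intro exI allI impI)
    fix s assume s: "0 < s" "s \<le> t"
    have "norm (xd z s) \<le> norm (xd z s + (s / (\<alpha> + 1)) *\<^sub>R grad z) + norm ((s / (\<alpha> + 1)) *\<^sub>R grad z)"
      using norm_triangle_ineq4[of "xd z s + (s / (\<alpha> + 1)) *\<^sub>R grad z" "(s / (\<alpha> + 1)) *\<^sub>R grad z"] by simp
    also have "\<dots> \<le> D * s / (\<alpha> + 1) + s / (\<alpha> + 1) * norm (grad z)"
      using main[OF s] s alpha by simp
    also have "\<dots> = ((D + norm (grad z)) / (\<alpha> + 1)) * s" by (simp add: divide_inverse algebra_simps)
    finally show "norm (xd z s) \<le> ((D + norm (grad z)) / (\<alpha> + 1)) * s" .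
  qed
qed

lemma refine:
  assumes K: "K \<ge> 0" and bdK: "\<And>r. 0 < r \<Longrightarrow> r \<le> t \<Longrightarrow> norm (xd z r) \<le> K * r"
    and s: "0 < s" "s \<le> t"
  shows "norm (xd z s + (s / (\<alpha> + 1)) *\<^sub>R grad z) \<le> K * s * (1 - H s)"
proof -
  define p where "p r = L * K * (\<beta> * (r powr (\<alpha> + 2) / (\<alpha> + 2)) + (r powr (\<alpha> + 3) / (\<alpha> + 3)) / 2)" for r
  define p' where "p' r = L * K * (\<beta> * r powr (\<alpha> + 1) + r powr (\<alpha> + 2) / 2)" for r
  have "s powr \<alpha> * norm (xd z s + (s / (\<alpha> + 1)) *\<^sub>R grad z) \<le> p s"
  proof (rule wlem[OF s(1), of p p'])
    have c2: "continuous_on {0..s} (\<lambda>r. r powr (\<alpha> + 2))" using alpha by (intro cont_powr) simp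
    have c3: "continuous_on {0..s} (\<lambda>r. r powr (\<alpha> + 3))" using alpha by (intro cont_powr) simp
    show "continuous_on {0..s} p" unfolding p_def
      using alpha by (intro continuous_on_divide continuous_on_mult continuous_on_add
          continuous_on_const c2 c3) auto
    show "p 0 = 0" by (simp add: p_def)
  next
    fix r assume r: "0 < r" "r < s"
    have d2: "((\<lambda>r. r powr (\<alpha> + 2) / (\<alpha> + 2)) has_real_derivative r powr (\<alpha> + 1)) (at r)"
      using powr_div_deriv[of "\<alpha> + 2" r] alpha r by (simp add: add.commute)
    have d3: "((\<lambda>r. r powr (\<alpha> + 3) / (\<alpha> + 3)) has_real_derivative r powr (\<alpha> + 2)) (at r)"
      using powr_div_deriv[of "\<alpha> + 3" r] alpha r by (simp add: add.commute)
    show "(p has_real_derivative p' r) (at r)" unfolding p_def p'_def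
      using DERIV_cmult[OF DERIV_add[OF DERIV_cmult[OF d2, of \<beta>] DERIV_cdivide[OF d3, of 2]], of "L * K"] .
    have k: "norm (\<beta> *\<^sub>R hess (x z r) (xd z r) + grad (x z r) - grad z)
        \<le> \<beta> * L * norm (xd z r) + L * norm (x z r - z)" by (rule kbound)
    have u: "norm (xd z r) \<le> K * r" using bdK r s by simp
    have xx: "norm (x z r - z) \<le> K * r\<^sup>2 / 2" using r s by (intro xbound_quad) (auto intro!: bdK)
    have "\<beta> * L * norm (xd z r) \<le> \<beta> * L * (K * r)" using u beta Lpos by (simp add: mult_left_mono)
    moreover have "L * norm (x z r - z) \<le> L * (K * r\<^sup>2 / 2)" using xx Lpos by (simp add: mult_left_mono)
    ultimately have kD: "norm (\<beta> *\<^sub>R hess (x z r) (xd z r) + grad (x z r) - grad z)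
        \<le> \<beta> * L * (K * r) + L * (K * r\<^sup>2 / 2)" using k by linarith
    have "r powr \<alpha> * norm (\<beta> *\<^sub>R hess (x z r) (xd z r) + grad (x z r) - grad z)
        \<le> r powr \<alpha> * (\<beta> * L * (K * r) + L * (K * r\<^sup>2 / 2))"
      using mult_left_mono[OF kD, of "r powr \<alpha>"] by simp
    also have "\<dots> = p' r" using r by (simp add: p'_def powr_add algebra_simps)
    finally show "r powr \<alpha> * norm (\<beta> *\<^sub>R hess (x z r) (xd z r) + grad (x z r) - grad z) \<le> p' r" .
  qed
  also have "p s = s powr \<alpha> * (K * s * (1 - H s))"
  proof -
    have e1: "s powr (\<alpha> + 2) = s powr \<alpha> * s\<^sup>2" "s powr (\<alpha> + 3) = s powr \<alpha> * s ^ 3"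
      using s by (simp_all add: powr_add)
    have e2: "1 - H s = \<beta> * L * s / (\<alpha> + 2) + L * s\<^sup>2 / (2 * (\<alpha> + 3))" by (simp add: Hfun_def)
    show ?thesis unfolding p_def e1 e2
      by (rule alg1)
  qed
  finally have "s powr \<alpha> * norm (xd z s + (s / (\<alpha> + 1)) *\<^sub>R grad z) \<le> s powr \<alpha> * (K * s * (1 - H s))" .
  moreover have "s powr \<alpha> > 0" using s by simp
  ultimately show ?thesis using mult_le_cancel_left_pos by blast
qed

end

lemma final_alg:
  fixes d \<alpha> lam \<beta> L t h \<gamma> N E P Q1 Q2 X cc cA K a :: real
  assumes dd: "\<alpha> = d - 1" and alpha: "\<alpha> > 0" and lam: "0 \<le> lam" "lam \<le> 1" and beta: "\<beta> \<ge> 0" and L: "L > 0"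
    and t: "t > 0" and h: "h > 0" "h \<le> 1" and g: "\<gamma> > 0"
    and cA: "cA = 1 + \<alpha> * (2 * lam - 1)" and cc: "cc = \<bar>cA\<bar>"
    and K: "K = \<gamma> / (d * h)" and a: "a = t / d"
    and N2: "N\<^sup>2 = E\<^sup>2 - 2 * a * P + a\<^sup>2 * \<gamma>\<^sup>2" and N0: "N \<ge> 0" and E0: "E \<ge> 0" and X0: "X \<ge> 0"
    and P: "\<bar>P\<bar> \<le> E * \<gamma>" and E: "E \<le> K * t * (1 - h)" and N: "N \<le> K * t"
    and Q1: "Q1 \<le> L * N\<^sup>2" and Q2: "Q2 \<le> N * L * X" and X: "X \<le> K * t\<^sup>2 / 2"
  shows "- (\<alpha> / t) * N\<^sup>2 - \<beta> * Q1 - Q2 - (P - a * \<gamma>\<^sup>2) + lam * \<alpha> / t * N\<^sup>2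
     \<ge> (a * \<gamma>\<^sup>2 / (d * h\<^sup>2)) *
        ((1 + \<alpha> * lam) * h\<^sup>2 - \<alpha> * (1 - lam) * (1 - h)\<^sup>2 - cc * h * (1 - h) - \<beta> * L * t - L * t\<^sup>2 / 2)"
proof -
  define M where "M = a * \<gamma>\<^sup>2 / (d * h\<^sup>2)"
  have d: "d > 0" using alpha dd by simp
  have T1eq: "- (\<alpha> / t) * N\<^sup>2 - (P - a * \<gamma>\<^sup>2) + lam * \<alpha> / t * N\<^sup>2
      = a * \<gamma>\<^sup>2 * (1 + \<alpha> * lam) / d - P * cA / d - \<alpha> * (1 - lam) * E\<^sup>2 / t"
  proof -
    have "- (\<alpha> / t) * N\<^sup>2 - (P - a * \<gamma>\<^sup>2) + lam * \<alpha> / t * N\<^sup>2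
        = - (\<alpha> * (1 - lam) / t) * (E\<^sup>2 - 2 * a * P + a\<^sup>2 * \<gamma>\<^sup>2) - P + a * \<gamma>\<^sup>2"
      unfolding N2[symmetric] using t by (simp add: field_simps)
    also have "\<dots> = a * \<gamma>\<^sup>2 * (1 + \<alpha> * lam) / d - P * cA / d - \<alpha> * (1 - lam) * E\<^sup>2 / t"
      unfolding a cA dd using t d by (simp add: field_simps power2_eq_square)
    finally show ?thesis .
  qed
  have Pc: "P * cA \<le> E * \<gamma> * cc"
  proof -
    have "P * cA \<le> \<bar>P\<bar> * \<bar>cA\<bar>" by (metis abs_ge_self abs_mult)
    also have "\<dots> \<le> E * \<gamma> * cc" using P cc by (simp add: mult_right_mono)
    finally show ?thesis .
  qed
  have ccn: "cc \<ge> 0" using cc by simp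
  have b1: "P * cA / d \<le> K * t * (1 - h) * \<gamma> * cc / d"
  proof -
    have "E * \<gamma> * cc \<le> K * t * (1 - h) * \<gamma> * cc" using E g ccn by (simp add: mult_right_mono)
    then show ?thesis using Pc d by (simp add: divide_right_mono)
  qed
  have b2: "\<alpha> * (1 - lam) * E\<^sup>2 / t \<le> \<alpha> * (1 - lam) * (K * t * (1 - h))\<^sup>2 / t"
  proof -
    have "E\<^sup>2 \<le> (K * t * (1 - h))\<^sup>2" using E E0 by (simp add: power_mono)
    then show ?thesis using alpha lam t by (simp add: divide_right_mono mult_left_mono)
  qed
  have Id1: "a * \<gamma>\<^sup>2 * (1 + \<alpha> * lam) / d - K * t * (1 - h) * \<gamma> * cc / d
      - \<alpha> * (1 - lam) * (K * t * (1 - h))\<^sup>2 / t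
      = M * ((1 + \<alpha> * lam) * h\<^sup>2 - \<alpha> * (1 - lam) * (1 - h)\<^sup>2 - cc * h * (1 - h))"
    unfolding M_def K a dd using t d h by (simp add: field_simps power2_eq_square)
  have I2: "\<beta> * Q1 \<le> \<beta> * L * (K * t)\<^sup>2"
  proof -
    have "N\<^sup>2 \<le> (K * t)\<^sup>2" using N N0 by (simp add: power_mono)
    then have "Q1 \<le> L * (K * t)\<^sup>2" using Q1 L by (smt (verit) mult_left_mono)
    then show ?thesis using beta by (simp add: mult_left_mono mult.assoc)
  qed
  have Id2: "\<beta> * L * (K * t)\<^sup>2 = M * (\<beta> * L * t)"
    unfolding M_def K a using t d h by (simp add: field_simps power2_eq_square)
  have I3: "Q2 \<le> K * t * L * (K * t\<^sup>2 / 2)"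
  proof -
    have "N * L * X \<le> K * t * L * X" using N L X0 by (simp add: mult_right_mono)
    also have "\<dots> \<le> K * t * L * (K * t\<^sup>2 / 2)"
      using X K g h d t L by (intro mult_left_mono) auto
    finally show ?thesis using Q2 by simp
  qed
  have Id3: "K * t * L * (K * t\<^sup>2 / 2) = M * (L * t\<^sup>2 / 2)"
    unfolding M_def K a using t d h by (simp add: field_simps power2_eq_square)
  have "- (\<alpha> / t) * N\<^sup>2 - \<beta> * Q1 - Q2 - (P - a * \<gamma>\<^sup>2) + lam * \<alpha> / t * N\<^sup>2
      \<ge> M * ((1 + \<alpha> * lam) * h\<^sup>2 - \<alpha> * (1 - lam) * (1 - h)\<^sup>2 - cc * h * (1 - h))
        - M * (\<beta> * L * t) - M * (L * t\<^sup>2 / 2)"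
    using T1eq b1 b2 Id1 I2 Id2 I3 Id3 by linarith
  moreover have "M * ((1 + \<alpha> * lam) * h\<^sup>2 - \<alpha> * (1 - lam) * (1 - h)\<^sup>2 - cc * h * (1 - h) - \<beta> * L * t - L * t\<^sup>2 / 2)
     = M * ((1 + \<alpha> * lam) * h\<^sup>2 - \<alpha> * (1 - lam) * (1 - h)\<^sup>2 - cc * h * (1 - h))
        - M * (\<beta> * L * t) - M * (L * t\<^sup>2 / 2)" by (simp only: right_diff_distrib)
  ultimately have "- (\<alpha> / t) * N\<^sup>2 - \<beta> * Q1 - Q2 - (P - a * \<gamma>\<^sup>2) + lam * \<alpha> / t * N\<^sup>2
     \<ge> M * ((1 + \<alpha> * lam) * h\<^sup>2 - \<alpha> * (1 - lam) * (1 - h)\<^sup>2 - cc * h * (1 - h) - \<beta> * L * t - L * t\<^sup>2 / 2)"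
    by linarith
  then show ?thesis by (simp only: M_def)
qed

context sys begin

lemma xdd_eq: assumes r: "r > 0"
  shows "xdd z r = - (\<alpha> / r) *\<^sub>R xd z r - \<beta> *\<^sub>R (hess (x z r) (xd z r)) - grad (x z r)"
proof -
  have "xdd z r = (xdd z r + (\<alpha> / r) *\<^sub>R xd z r + \<beta> *\<^sub>R (hess (x z r) (xd z r)) + grad (x z r))
     - (\<alpha> / r) *\<^sub>R xd z r - \<beta> *\<^sub>R (hess (x z r) (xd z r)) - grad (x z r)" by simp
  also have "\<dots> = - (\<alpha> / r) *\<^sub>R xd z r - \<beta> *\<^sub>R (hess (x z r) (xd z r)) - grad (x z r)"
    using ode[of r z] r by simp
  finally show ?thesis .
qed

lemma varphi_eq: assumes t: "t > 0"
  shows "varphi xd \<alpha> lam z t = xd z t \<bullet> xdd z t + lam * \<alpha> / t * (norm (xd z t))\<^sup>2"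
proof -
  have fe: "(\<lambda>s. (norm (xd z s))\<^sup>2) = (\<lambda>s. xd z s \<bullet> xd z s)"
    by (simp add: fun_eq_iff power2_norm_eq_inner)
  have "((\<lambda>s. xd z s \<bullet> xd z s) has_derivative
      (\<lambda>h. xd z t \<bullet> (h *\<^sub>R xdd z t) + (h *\<^sub>R xdd z t) \<bullet> xd z t)) (at t)"
    using xd_C1[OF t] unfolding has_vector_derivative_def
    by (intro has_derivative_inner) auto
  then have "((\<lambda>s. xd z s \<bullet> xd z s) has_real_derivative 2 * (xd z t \<bullet> xdd z t)) (at t)"
    unfolding has_field_derivative_def
    by (rule has_derivative_eq_rhs) (simp add: fun_eq_iff inner_commute algebra_simps)
  then have "deriv (\<lambda>s. (norm (xd z s))\<^sup>2) t = 2 * (xd z t \<bullet> xdd z t)"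
    unfolding fe by (rule DERIV_imp_deriv)
  then show ?thesis by (simp add: varphi_def)
qed

lemma sharp:
  assumes t: "0 < t" "t < tau2 \<alpha> \<beta> L" and r: "0 < r" "r \<le> t"
  shows "norm (xd z r) \<le> (norm (grad z) / ((\<alpha> + 1) * H t)) * r"
proof -
  obtain C where C: "\<And>s. 0 < s \<Longrightarrow> s \<le> t \<Longrightarrow> norm (xd z s) \<le> C * s"
    using crude[OF t(1), of z] by blast
  define F where "F r = norm (xd z r) / r" for r
  define S where "S = Sup (F ` {0<..t})"
  have bdd: "bdd_above (F ` {0<..t})"
  proof (rule bdd_aboveI)
    fix y assume "y \<in> F ` {0<..t}"
    then obtain s where s: "0 < s" "s \<le> t" "y = F s" by auto
    then show "y \<le> C" using C[OF s(1,2)] by (simp add: F_def divide_le_eq)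
  qed
  have ne: "{0<..t} \<noteq> {}" using t by auto
  have ub: "F s \<le> S" if "0 < s" "s \<le> t" for s
    unfolding S_def using bdd that by (intro cSUP_upper) auto
  have bdS: "norm (xd z s) \<le> S * s" if "0 < s" "s \<le> t" for s
    using ub[OF that] that by (simp add: F_def divide_le_eq)
  have S0: "S \<ge> 0" using ub[of t] t by (simp add: F_def order_trans[OF _ ub[of t]])
  define h where "h = H t"
  have h: "h > 1/2" "h \<le> 1" using H_gt_half[of t] H_le1[of t] t by (auto simp: h_def)
  define \<gamma> where "\<gamma> = norm (grad z)"
  have "Sup (F ` {0<..t}) \<le> \<gamma> / (\<alpha> + 1) + S * (1 - h)"
  proof (rule cSUP_least[OF ne])
    fix s assume s: "s \<in> {0<..t}"
    then have s': "0 < s" "s \<le> t" by auto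
    have e: "norm (xd z s + (s / (\<alpha> + 1)) *\<^sub>R grad z) \<le> S * s * (1 - H s)"
      by (rule refine[OF S0 bdS s']) auto
    have "H s \<ge> h" unfolding h_def using s' by (intro H_mono) auto
    then have "S * s * (1 - H s) \<le> S * s * (1 - h)" using S0 s' by (intro mult_left_mono) auto
    with e have e2: "norm (xd z s + (s / (\<alpha> + 1)) *\<^sub>R grad z) \<le> S * s * (1 - h)" by linarith
    have "norm (xd z s) \<le> norm (xd z s + (s / (\<alpha> + 1)) *\<^sub>R grad z) + norm ((s / (\<alpha> + 1)) *\<^sub>R grad z)"
      using norm_triangle_ineq4[of "xd z s + (s / (\<alpha> + 1)) *\<^sub>R grad z" "(s / (\<alpha> + 1)) *\<^sub>R grad z"] by simp
    also have "norm ((s / (\<alpha> + 1)) *\<^sub>R grad z) = s * (\<gamma> / (\<alpha> + 1))"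
      using s' alpha by (simp add: \<gamma>_def)
    finally have "norm (xd z s) \<le> s * (\<gamma> / (\<alpha> + 1) + S * (1 - h))" using e2 by (simp add: algebra_simps)
    then show "F s \<le> \<gamma> / (\<alpha> + 1) + S * (1 - h)" using s' by (simp add: F_def divide_le_eq mult.commute)
  qed
  then have "S \<le> \<gamma> / (\<alpha> + 1) + S * (1 - h)" by (simp only: S_def)
  then have "S * h \<le> \<gamma> / (\<alpha> + 1)" by (simp add: algebra_simps)
  moreover have hp: "h > 0" using h by simp
  ultimately have "S \<le> \<gamma> / (\<alpha> + 1) / h" using pos_le_divide_eq[OF hp] by blast
  then have "S \<le> \<gamma> / ((\<alpha> + 1) * h)" by simp
  then have "S * r \<le> \<gamma> / ((\<alpha> + 1) * h) * r" using r by (intro mult_right_mono) auto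
  then show ?thesis using bdS[OF r] by (simp add: h_def \<gamma>_def)
qed

lemma pos:
  assumes z: "z \<notin> argmin_set \<phi>" and t: "0 < t" "t < tau3 \<alpha> \<beta> L lam"
  shows "varphi xd \<alpha> lam z t > 0"
proof -
  have t2: "t < tau2 \<alpha> \<beta> L" using t tau3_props by linarith
  define g0 where "g0 = grad z"
  define \<gamma> where "\<gamma> = norm g0"
  have g: "\<gamma> > 0" using grad_ne[OF z] by (simp add: \<gamma>_def g0_def)
  define h where "h = H t"
  have h: "h > 1/2" "h \<le> 1" using H_gt_half[of t] H_le1[of t] t t2 by (auto simp: h_def)
  define K where "K = \<gamma> / ((\<alpha> + 1) * h)"
  define a where "a = t / (\<alpha> + 1)"
  define u where "u = xd z t"
  define e where "e = u + a *\<^sub>R g0"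
  define N where "N = norm u"
  define E where "E = norm e"
  define P where "P = e \<bullet> g0"
  define Q1 where "Q1 = u \<bullet> hess (x z t) u"
  define Q2 where "Q2 = u \<bullet> (grad (x z t) - g0)"
  define X where "X = norm (x z t - z)"
  have bdK: "norm (xd z r) \<le> K * r" if "0 < r" "r \<le> t" for r
    using sharp[OF t(1) t2 that] by (simp add: K_def h_def \<gamma>_def g0_def)
  have K0: "K \<ge> 0" using g h alpha unfolding K_def by (intro divide_nonneg_pos mult_pos_pos) auto
  have ue: "u = e - a *\<^sub>R g0" by (simp add: e_def)
  have N2: "N\<^sup>2 = E\<^sup>2 - 2 * a * P + a\<^sup>2 * \<gamma>\<^sup>2"
  proof -
    have "N\<^sup>2 = (e - a *\<^sub>R g0) \<bullet> (e - a *\<^sub>R g0)"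
      unfolding N_def ue by (simp only: power2_norm_eq_inner)
    also have "\<dots> = e \<bullet> e - 2 * a * (e \<bullet> g0) + a\<^sup>2 * (g0 \<bullet> g0)"
      by (simp add: inner_diff_left inner_diff_right inner_commute algebra_simps power2_eq_square)
    also have "\<dots> = E\<^sup>2 - 2 * a * P + a\<^sup>2 * \<gamma>\<^sup>2"
      by (simp only: E_def P_def \<gamma>_def power2_norm_eq_inner)
    finally show ?thesis .
  qed
  have Pb: "\<bar>P\<bar> \<le> E * \<gamma>" unfolding P_def E_def \<gamma>_def by (rule Cauchy_Schwarz_ineq2)
  have Eb: "E \<le> K * t * (1 - h)"
    using refine[OF K0 bdK t(1) order_refl] by (simp add: E_def e_def u_def a_def g0_def h_def)
  have Nb: "N \<le> K * t" using bdK[OF t(1) order_refl] by (simp add: N_def u_def)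
  have Q1b: "Q1 \<le> L * N\<^sup>2"
  proof -
    have "Q1 \<le> norm u * norm (hess (x z t) u)" unfolding Q1_def by (rule norm_cauchy_schwarz)
    also have "\<dots> \<le> norm u * (L * norm u)" by (intro mult_left_mono hess_bound) auto
    finally show ?thesis by (simp add: N_def power2_eq_square algebra_simps)
  qed
  have Q2b: "Q2 \<le> N * L * X"
  proof -
    have "Q2 \<le> norm u * norm (grad (x z t) - g0)" unfolding Q2_def by (rule norm_cauchy_schwarz)
    also have "\<dots> \<le> norm u * (L * norm (x z t - z))"
      unfolding g0_def by (intro mult_left_mono lipschitz) auto
    finally show ?thesis by (simp add: N_def X_def algebra_simps)
  qed
  have Xb: "X \<le> K * t\<^sup>2 / 2" unfolding X_def
    using t by (intro xbound_quad) (auto intro!: bdK)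
  have vp: "varphi xd \<alpha> lam z t = - (\<alpha> / t) * N\<^sup>2 - \<beta> * Q1 - Q2 - (P - a * \<gamma>\<^sup>2) + lam * \<alpha> / t * N\<^sup>2"
  proof -
    have "u \<bullet> xdd z t = - (\<alpha> / t) * (u \<bullet> u) - \<beta> * Q1 - u \<bullet> grad (x z t)"
      unfolding xdd_eq[OF t(1)] Q1_def u_def by (simp add: inner_diff_right)
    also have "u \<bullet> grad (x z t) = Q2 + (P - a * \<gamma>\<^sup>2)"
      unfolding Q2_def P_def ue \<gamma>_def
      by (simp add: inner_diff_left inner_diff_right power2_norm_eq_inner)
    finally have "u \<bullet> xdd z t = - (\<alpha> / t) * N\<^sup>2 - \<beta> * Q1 - Q2 - (P - a * \<gamma>\<^sup>2)"
      by (simp add: N_def power2_norm_eq_inner)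
    then show ?thesis using varphi_eq[OF t(1), of z] by (simp add: u_def N_def)
  qed
  have fa: "- (\<alpha> / t) * N\<^sup>2 - \<beta> * Q1 - Q2 - (P - a * \<gamma>\<^sup>2) + lam * \<alpha> / t * N\<^sup>2
     \<ge> (a * \<gamma>\<^sup>2 / ((\<alpha> + 1) * h\<^sup>2)) *
        ((1 + \<alpha> * lam) * h\<^sup>2 - \<alpha> * (1 - lam) * (1 - h)\<^sup>2 - cc * h * (1 - h) - \<beta> * L * t - L * t\<^sup>2 / 2)"
    by (rule final_alg[where cA = "1 + \<alpha> * (2 * lam - 1)" and d = "\<alpha> + 1" and K = K and E = E and X = X])
       (use alpha lam0 lam1 beta Lpos t g h Nb Eb Pb Q1b Q2b Xb N2 in
         \<open>auto simp: cc_def K_def a_def N_def E_def X_def\<close>)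
  have "(1 + \<alpha> * lam) * h\<^sup>2 - \<alpha> * (1 - lam) * (1 - h)\<^sup>2 - cc * h * (1 - h) - \<beta> * L * t - L * t\<^sup>2 / 2
      = G t" by (simp add: G_eq f_def h_def)
  moreover have "G t > 0" using G_pos_before[of t] t by simp
  moreover have "a * \<gamma>\<^sup>2 / ((\<alpha> + 1) * h\<^sup>2) > 0" using alpha t g h by (simp add: a_def)
  ultimately have "(a * \<gamma>\<^sup>2 / ((\<alpha> + 1) * h\<^sup>2)) *
        ((1 + \<alpha> * lam) * h\<^sup>2 - \<alpha> * (1 - lam) * (1 - h)\<^sup>2 - cc * h * (1 - h) - \<beta> * L * t - L * t\<^sup>2 / 2) > 0"
    by (simp only: mult_pos_pos)
  then show ?thesis using fa vp by linarith
qed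

end

theorem mainTheorem6:
  fixes \<phi> :: "real^'n \<Rightarrow> real"
    and grad :: "real^'n \<Rightarrow> real^'n"
    and hess :: "real^'n \<Rightarrow> ((real^'n) \<Rightarrow>\<^sub>L (real^'n))"
    and x xd xdd :: "real^'n \<Rightarrow> real \<Rightarrow> real^'n"
    and L \<alpha> \<beta> lam :: real
  assumes grad: "\<And>y. (\<phi> has_derivative (\<lambda>h. grad y \<bullet> h)) (at y)"
    and hess: "\<And>y. (grad has_derivative blinfun_apply (hess y)) (at y)"
    and hess_cont: "continuous_on UNIV hess"
    and convex: "convex_on UNIV \<phi>"
    and L_pos: "L > 0"
    and lipschitz: "\<And>y w. norm (grad y - grad w) \<le> L * norm (y - w)"
    and has_min: "\<exists>y. \<forall>w. \<phi> y \<le> \<phi> w"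
    and alpha: "\<alpha> > 0"
    and beta: "\<beta> \<ge> 0"
    and lam: "0 \<le> lam" "lam \<le> 1"
    and x_C1: "\<And>z t. t \<ge> 0 \<Longrightarrow> (x z has_vector_derivative xd z t) (at t within {0..})"
    and xd_cont: "\<And>z. continuous_on {0..} (xd z)"
    and xd_C1: "\<And>z t. t > 0 \<Longrightarrow> (xd z has_vector_derivative xdd z t) (at t)"
    and xdd_cont: "\<And>z. continuous_on {0<..} (xdd z)"
    and ode: "\<And>z t. t > 0 \<Longrightarrow>
       xdd z t + (\<alpha> / t) *\<^sub>R xd z t + \<beta> *\<^sub>R (hess (x z t) (xd z t)) + grad (x z t) = 0"
    and init_pos: "\<And>z. x z 0 = z"
    and init_vel: "\<And>z. xd z 0 = 0"
  shows "tau1 \<alpha> \<beta> L > tau2 \<alpha> \<beta> L \<and> tau2 \<alpha> \<beta> L > tau3 \<alpha> \<beta> L lam \<and> tau3 \<alpha> \<beta> L lam > 0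
     \<and> ereal (tau3 \<alpha> \<beta> L lam) \<le> (INF z \<in> - argmin_set \<phi>. Tlam xd \<alpha> lam z)"
proof -
  interpret S: sys \<alpha> \<beta> L lam \<phi> grad hess x xd xdd
    by unfold_locales (use assms in auto)
  have c1: "tau1 \<alpha> \<beta> L > tau2 \<alpha> \<beta> L" by (rule S.tau12)
  have c2: "0 < tau3 \<alpha> \<beta> L lam \<and> tau3 \<alpha> \<beta> L lam < tau2 \<alpha> \<beta> L" using S.tau3_props by blast
  have c3: "ereal (tau3 \<alpha> \<beta> L lam) \<le> (INF z \<in> - argmin_set \<phi>. Tlam xd \<alpha> lam z)"
  proof (rule INF_greatest)
    fix z assume z: "z \<in> - argmin_set \<phi>"
    show "ereal (tau3 \<alpha> \<beta> L lam) \<le> Tlam xd \<alpha> lam z" unfolding Tlam_def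
    proof (rule Inf_greatest)
      fix y assume "y \<in> ereal ` {t. 0 < t \<and> varphi xd \<alpha> lam z t \<le> 0}"
      then obtain t where t: "0 < t" "varphi xd \<alpha> lam z t \<le> 0" "y = ereal t" by auto
      have "\<not> t < tau3 \<alpha> \<beta> L lam" using S.pos[of z t] z t by auto
      then show "ereal (tau3 \<alpha> \<beta> L lam) \<le> y" using t by simp
    qed
  qed
  show ?thesis using c1 c2 c3 by blast
qed

end
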